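(* For every $\alpha>\sqrt{1/3}$, there is no voting rule $f$ (assigning an alternative to every preference profile, for every number of voters $n$ and alternatives $m$, and not depending on the utility distribution) such that for all $n,m$ and every symmetric distribution $\mathcal{D}$ supported on $[0,1]$, every preference profile $\sigma$ satisfies $\mathbb{E}_{\mathcal{D}}[\mathrm{sw}(f(\sigma),u)]\ge\alpha\max_{j\in A}\mathbb{E}_{\mathcal{D}}[\mathrm{sw}(j,u)]$.
   Context: There are $n$ voters and $m$ alternatives $A=\{1,\dots,m\}$. A preference profile $\sigma$ consists of a ranking of $A$ for each voter. Given a distribution $\mathcal{D}$ and profile $\sigma$, a random utility profile $u$ consistent with $\sigma$ is generated as follows: independently for each voter $i$, draw $m$ i.i.d. samples from $\mathcal{D}$ and assign them, from highest to lowest, to the alternatives in the order of voter $i$'s ranking. The social welfare of $j$ is $\mathrm{sw}(j,u)=\sum_i u_{ij}$; $\mathbb{E}_{\mathcal{D}}$ is expectation over $u$ generated with $\mathcal{D}$. A distribution $\mathcal{D}$ on $[0,1]$ is symmetric if $\Pr_{x\sim\mathcal{D}}(x\le\frac12-\epsilon)=\Pr_{x\sim\mathcal{D}}(x\ge\frac12+\epsilon)$ for all $\epsilon\in[0,\frac12]$. *)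

theory Defs
  imports "HOL-Probability.Probability"
begin

text \<open>Alternatives are 0..<m. A preference profile for m alternatives is a list of
rankings (one per voter, so n = length of the list); each ranking lists all
alternatives exactly once, best first.\<close>

definition valid_profile :: "nat \<Rightarrow> nat list list \<Rightarrow> bool" where
  "valid_profile m \<sigma> \<longleftrightarrow> (\<forall>r \<in> set \<sigma>. distinct r \<and> set r = {..<m})"

definition rank_pos :: "nat list \<Rightarrow> nat \<Rightarrow> nat" where
  "rank_pos r j = (THE k. k < length r \<and> r ! k = j)"

text \<open>Random utility profile: the samples are s (i,k) for voter i < n and k < m,
i.i.d. from D. Voter i's samples are sorted from highest to lowest and assigned to
the alternatives in the order of voter i's ranking.\<close>
definition utility :: "nat \<Rightarrow> nat list list \<Rightarrow> (nat \<times> nat \<Rightarrow> real) \<Rightarrow> nat \<Rightarrow> nat \<Rightarrow> real" where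
  "utility m \<sigma> s i j = rev (sort (map (\<lambda>k. s (i, k)) [0..<m])) ! rank_pos (\<sigma> ! i) j"

definition sw :: "nat \<Rightarrow> nat list list \<Rightarrow> (nat \<times> nat \<Rightarrow> real) \<Rightarrow> nat \<Rightarrow> real" where
  "sw m \<sigma> s j = (\<Sum>i<length \<sigma>. utility m \<sigma> s i j)"

definition exp_sw :: "real measure \<Rightarrow> nat \<Rightarrow> nat list list \<Rightarrow> nat \<Rightarrow> real" where
  "exp_sw D m \<sigma> j = (\<integral>s. sw m \<sigma> s j \<partial>(PiM ({..<length \<sigma>} \<times> {..<m}) (\<lambda>_. D)))"

definition symmetric_dist :: "real measure \<Rightarrow> bool" where
  "symmetric_dist D \<longleftrightarrow> prob_space D \<and> sets D = sets borel \<and>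
     (AE x in D. x \<in> {0..1}) \<and>
     (\<forall>\<epsilon>\<in>{0..1/2}. measure D {x. x \<le> 1/2 - \<epsilon>} = measure D {x. x \<ge> 1/2 + \<epsilon>})"

end

theory Submission
  imports Defs
begin

lemma len_filter_sort: "length (filter P (sort xs)) = length (filter P xs)"
  by (metis mset_filter mset_sort size_mset)

lemma kth_ge_iff:
  fixes xs :: "real list"
  assumes k: "k < length xs"
  shows "(t \<le> rev (sort xs) ! k) \<longleftrightarrow> k < length (filter (\<lambda>x. t \<le> x) xs)"
proof -
  define zs where "zs = sort xs"
  define n where "n = length xs"
  have lz: "length zs = n" by (simp add: zs_def n_def)
  have so: "sorted zs" by (simp add: zs_def)
  have r: "rev zs ! k = zs ! (n - 1 - k)" using k lz by (simp add: rev_nth n_def)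
  have c: "length (filter (\<lambda>x. t \<le> x) xs) = card {i. i < n \<and> t \<le> zs ! i}"
    using len_filter_sort[of "\<lambda>x. t \<le> x" xs] lz by (simp add: zs_def length_filter_conv_card)
  show ?thesis
  proof (cases "t \<le> zs ! (n - 1 - k)")
    case True
    have "{n-1-k..<n} \<subseteq> {i. i < n \<and> t \<le> zs ! i}"
    proof
      fix i assume "i \<in> {n-1-k..<n}"
      then have "zs ! (n-1-k) \<le> zs ! i" using so lz by (intro sorted_nth_mono) auto
      then show "i \<in> {i. i < n \<and> t \<le> zs ! i}" using True \<open>i \<in> _\<close> by auto
    qed
    then have "card {n-1-k..<n} \<le> card {i. i < n \<and> t \<le> zs ! i}" by (intro card_mono) auto
    then have "k < card {i. i < n \<and> t \<le> zs ! i}" using k n_def by auto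
    then show ?thesis using True r c by (simp add: zs_def)
  next
    case False
    have "{i. i < n \<and> t \<le> zs ! i} \<subseteq> {n-k..<n}"
    proof
      fix i assume i: "i \<in> {i. i < n \<and> t \<le> zs ! i}"
      have "n - k \<le> i"
      proof (rule ccontr)
        assume "\<not> n - k \<le> i"
        then have "zs ! i \<le> zs ! (n-1-k)" using so lz k n_def by (intro sorted_nth_mono) auto
        then show False using False i by auto
      qed
      then show "i \<in> {n-k..<n}" using i by auto
    qed
    then have "card {i. i < n \<and> t \<le> zs ! i} \<le> card {n-k..<n}" by (intro card_mono) auto
    then have "\<not> k < card {i. i < n \<and> t \<le> zs ! i}" using k n_def by auto
    then show ?thesis using False r c by (simp add: zs_def)
  qed
qed

definition Lp :: "real \<Rightarrow> (real \<times> real) list" where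
  "Lp p = [(0,p),(1/2,1-2*p),(1,p)]"

definition Dp :: "real \<Rightarrow> real measure" where
  "Dp p = distr (measure_pmf (pmf_of_list (Lp p))) borel (\<lambda>x. x)"

lemma Lp_wf: "0 \<le> p \<Longrightarrow> p \<le> 1/2 \<Longrightarrow> pmf_of_list_wf (Lp p)"
  by (intro pmf_of_list_wfI) (auto simp: Lp_def)

lemma Dp_sets[simp]: "sets (Dp p) = sets borel" by (simp add: Dp_def)
lemma Dp_space[simp]: "space (Dp p) = UNIV" by (simp add: Dp_def)
lemma Dp_prob: "prob_space (Dp p)"
  unfolding Dp_def by (intro prob_space.prob_space_distr) (auto simp: measure_pmf.prob_space_axioms)

lemma Dp_measure:
  assumes "0 \<le> p" "p \<le> 1/2" "A \<in> sets borel"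
  shows "measure (Dp p) A = sum_list (map snd (filter (\<lambda>x. fst x \<in> A) (Lp p)))"
proof -
  have "measure (Dp p) A = measure (measure_pmf (pmf_of_list (Lp p))) A"
    unfolding Dp_def using assms by (subst measure_distr) auto
  also have "\<dots> = sum_list (map snd (filter (\<lambda>x. fst x \<in> A) (Lp p)))" by (rule measure_pmf_of_list[OF Lp_wf[OF assms(1,2)]])
  finally show ?thesis .
qed

lemma Dp_AE:
  assumes "0 \<le> p" "p \<le> 1/2"
  shows "AE x in Dp p. x \<in> {0, 1/2, 1}"
proof -
  have "AE x in measure_pmf (pmf_of_list (Lp p)). x \<in> {0, 1/2, 1}"
    using set_pmf_of_list[OF Lp_wf[OF assms]] by (auto simp: AE_measure_pmf_iff Lp_def)
  then show ?thesis unfolding Dp_def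
    by (subst AE_distr_iff) auto
qed

lemma Dp_symm:
  assumes "0 \<le> p" "p \<le> 1/2"
  shows "symmetric_dist (Dp p)"
proof -
  have ae: "AE x in Dp p. x \<in> {0..1}"
    using Dp_AE[OF assms] by eventually_elim auto
  have "measure (Dp p) {x. x \<le> 1/2 - e} = measure (Dp p) {x. x \<ge> 1/2 + e}" if e: "e \<in> {0..1/2}" for e
  proof -
    have b1: "{x::real. x \<le> 1/2 - e} \<in> sets borel" by measurable
    have b2: "{x::real. x \<ge> 1/2 + e} \<in> sets borel" by measurable
    show ?thesis using e
      by (simp add: Dp_measure[OF assms b1] Dp_measure[OF assms b2] Lp_def)
  qed
  then show ?thesis unfolding symmetric_dist_def using Dp_prob ae by auto
qed

lemma cyl_measure:
  fixes D :: "real measure"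
  assumes D: "prob_space D" "space D = UNIV" and C: "C \<subseteq> I" "finite I" and A: "A \<in> sets D"
  shows "measure (PiM I (\<lambda>_. D)) {t \<in> space (PiM I (\<lambda>_. D)). \<forall>k\<in>C. t k \<in> A} = measure D A ^ card C"
proof -
  define A' where "A' = (\<lambda>k. if k \<in> C then A else UNIV)"
  have A'[simp]: "A' i \<in> sets D" for i using A D by (auto simp: A'_def sets.top[of D, simplified D])
  have eq: "prod_emb I (\<lambda>_. D) I (Pi\<^sub>E I A') = {t \<in> space (PiM I (\<lambda>_. D)). \<forall>k\<in>C. t k \<in> A}"
    using C by (auto simp: prod_emb_def space_PiM PiE_iff A'_def extensional_def subset_iff) metis
  have "emeasure (PiM I (\<lambda>_. D)) {t \<in> space (PiM I (\<lambda>_. D)). \<forall>k\<in>C. t k \<in> A} = (\<Prod>i\<in>I. emeasure D (A' i))"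
    unfolding eq[symmetric] using C D by (intro emeasure_PiM_emb) auto
  also have "\<dots> = (\<Prod>i\<in>I. if i \<in> C then emeasure D A else 1)"
    using D by (intro prod.cong) (auto simp: A'_def prob_space.emeasure_space_1[of D, simplified D])
  also have "\<dots> = emeasure D A ^ card C"
    using C by (simp add: prod.If_cases Int_absorb1)
  also have "\<dots> = ennreal (measure D A ^ card C)"
    using finite_measure.emeasure_eq_measure[OF prob_space.finite_measure[OF D(1)]] by (simp add: ennreal_power)
  finally show ?thesis
    by (simp add: measure_def)
qed

definition Y :: "nat \<Rightarrow> nat \<Rightarrow> (nat \<Rightarrow> real) \<Rightarrow> real" where
  "Y m k t = rev (sort (map t [0..<m])) ! k"

definition Ncnt :: "nat \<Rightarrow> real \<Rightarrow> (nat \<Rightarrow> real) \<Rightarrow> nat" where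
  "Ncnt m c t = length (filter (\<lambda>x. c \<le> x) (map t [0..<m]))"

lemma Ncnt_sum: "Ncnt m c t = (\<Sum>j<m. if c \<le> t j then 1 else 0)"
  by (induction m) (auto simp: Ncnt_def)

lemma Ncnt_card: "Ncnt m c t = card {j. j < m \<and> c \<le> t j}"
  unfolding Ncnt_def by (auto simp: length_filter_conv_card intro!: arg_cong[where f=card])

lemma Y_ge_iff: "k < m \<Longrightarrow> (c \<le> Y m k t) \<longleftrightarrow> k < Ncnt m c t"
  unfolding Y_def Ncnt_def by (subst kth_ge_iff) auto

lemma Y_in: "k < m \<Longrightarrow> Y m k t \<in> t ` {..<m}"
proof -
  assume k: "k < m"
  have "Y m k t \<in> set (rev (sort (map t [0..<m])))" unfolding Y_def using k by (intro nth_mem) simp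
  then show ?thesis by auto
qed

lemma Ncnt_meas:
  assumes "sets D = sets borel" and that: "{..<m} \<subseteq> I"
  shows "(\<lambda>t. real (Ncnt m c t)) \<in> borel_measurable (PiM I (\<lambda>_. D))"
proof -
  have "(\<lambda>t. real (Ncnt m c t)) = (\<lambda>t. \<Sum>j<m. if c \<le> t j then 1 else 0)"
    by (auto simp: Ncnt_sum intro!: sum.cong)
  moreover have "(\<lambda>t. \<Sum>j<m. if c \<le> t j then 1 else (0::real)) \<in> borel_measurable (PiM I (\<lambda>_. D))"
  proof (intro borel_measurable_sum)
    fix j assume "j \<in> {..<m}"
    then have j: "j \<in> I" using that by auto
    have "(\<lambda>t. t j) \<in> borel_measurable (PiM I (\<lambda>_. D))"
      using measurable_component_singleton[OF j, of "\<lambda>_. D"] assms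
      by (simp add: measurable_def)
    then show "(\<lambda>t. if c \<le> t j then 1 else (0::real)) \<in> borel_measurable (PiM I (\<lambda>_. D))"
      by measurable
  qed
  ultimately show ?thesis by simp
qed

lemma Y_meas:
  assumes "sets D = sets borel" "k < m"
  shows "Y m k \<in> borel_measurable (PiM {..<m} (\<lambda>_. D))"
proof (subst borel_measurable_iff_ge, intro allI)
  fix a
  have "{w \<in> space (PiM {..<m} (\<lambda>_. D)). a \<le> Y m k w} = {w \<in> space (PiM {..<m} (\<lambda>_. D)). real k < real (Ncnt m a w)}"
    using Y_ge_iff[OF assms(2)] by auto
  also have "\<dots> \<in> sets (PiM {..<m} (\<lambda>_. D))"
    using Ncnt_meas[OF assms(1), of m "{..<m}" a] by measurable
  finally show "{w \<in> space (PiM {..<m} (\<lambda>_. D)). a \<le> Y m k w} \<in> sets (PiM {..<m} (\<lambda>_. D))" .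
qed

abbreviation Om :: "nat \<Rightarrow> real \<Rightarrow> (nat \<Rightarrow> real) measure" where
  "Om m p \<equiv> PiM {..<m} (\<lambda>_. Dp p)"

definition cval :: "nat \<Rightarrow> real \<Rightarrow> nat \<Rightarrow> real" where
  "cval m p k = (\<integral>t. Y m k t \<partial>Om m p)"

lemma Om_prob: "prob_space (Om m p)"
  by (intro prob_space_PiM Dp_prob)

lemma Y_val:
  assumes "k < m" "\<forall>j<m. t j \<in> {0, 1/2, 1}"
  shows "Y m k t = (if k < Ncnt m (1/2) t then 1/2 else 0) + (if k < Ncnt m 1 t then 1/2 else 0)"
proof -
  have v: "Y m k t \<in> {0, 1/2, 1}" using Y_in[OF assms(1), of t] assms(2) by auto
  have e1: "(1/2 \<le> Y m k t) = (k < Ncnt m (1/2) t)" by (rule Y_ge_iff[OF assms(1)])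
  have e2: "(1 \<le> Y m k t) = (k < Ncnt m 1 t)" by (rule Y_ge_iff[OF assms(1)])
  show ?thesis using v e1[symmetric] e2[symmetric] by auto
qed

lemma Ncnt_sum_real: "real (Ncnt m c t) = (\<Sum>j<m. if c \<le> t j then 1 else 0)"
  by (induction m) (auto simp: Ncnt_def)

context
  fixes p :: real
  assumes p0: "0 \<le> p" and p1: "p \<le> 1/2"
begin

lemma Om_AE: "AE t in Om m p. \<forall>j<m. t j \<in> {0, 1/2, 1}"
proof -
  have "\<forall>j\<in>{..<m}. AE t in Om m p. t j \<in> {0, 1/2, 1}"
    using AE_PiM_component[of "{..<m}" "\<lambda>_. Dp p", OF Dp_prob _ Dp_AE[OF p0 p1]] by auto
  then have "AE t in Om m p. \<forall>j\<in>{..<m}. t j \<in> {0, 1/2, 1}"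
    by (subst AE_finite_all) auto
  then show ?thesis by auto
qed

lemma Y_int: "k < m \<Longrightarrow> integrable (Om m p) (Y m k)"
proof -
  assume k: "k < m"
  interpret prob_space "Om m p" by (rule Om_prob)
  show ?thesis
  proof (rule integrable_const_bound[where B=1])
    show "AE t in Om m p. norm (Y m k t) \<le> 1"
      using Om_AE[of m]
    proof eventually_elim
      fix t :: "nat \<Rightarrow> real" assume t: "\<forall>j<m. t j \<in> {0, 1/2, 1}"
      obtain j where "j < m" "Y m k t = t j" using Y_in[OF k, of t] by auto
      then show "norm (Y m k t) \<le> 1" using t by force
    qed
    show "Y m k \<in> borel_measurable (Om m p)" by (rule Y_meas) (auto simp: k)
  qed
qed

lemma Ncnt_meas': "(\<lambda>t. real (Ncnt m c t)) \<in> borel_measurable (Om m p)"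
  by (rule Ncnt_meas) auto

lemma cyl: "C \<subseteq> {..<m} \<Longrightarrow> A \<in> sets borel \<Longrightarrow>
   measure (Om m p) {t \<in> space (Om m p). \<forall>k\<in>C. t k \<in> A} = measure (Dp p) A ^ card C"
  by (rule cyl_measure) (auto simp: Dp_prob)

lemma cyl_sets: "C \<subseteq> {..<m} \<Longrightarrow> A \<in> sets borel \<Longrightarrow> {t \<in> space (Om m p). \<forall>k\<in>C. t k \<in> A} \<in> sets (Om m p)"
proof -
  assume C: "C \<subseteq> {..<m}" and A: "A \<in> sets borel"
  have "{t \<in> space (Om m p). \<forall>k\<in>C. t k \<in> A} = {t \<in> space (Om m p). \<forall>k\<in>C \<inter> {..<m}. t k \<in> A}"
    using C by auto
  also have "\<dots> \<in> sets (Om m p)"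
  proof (intro sets.sets_Collect_finite_All)
    fix k assume "k \<in> C \<inter> {..<m}"
    then have "(\<lambda>t. t k) \<in> measurable (Om m p) (Dp p)" by (intro measurable_component_singleton) auto
    then show "{t \<in> space (Om m p). t k \<in> A} \<in> sets (Om m p)" using A by (auto intro: measurable_sets_Collect)
  qed auto
  finally show ?thesis .
qed

lemma E_Ncnt: "(\<integral>t. real (Ncnt m c t) \<partial>Om m p) = m * measure (Dp p) {x. c \<le> x}"
proof -
  interpret prob_space "Om m p" by (rule Om_prob)
  define S where "S j = {t \<in> space (Om m p). \<forall>k\<in>{j}. t k \<in> {x. c \<le> x}}" for j
  have S: "j < m \<Longrightarrow> S j \<in> sets (Om m p)" for j unfolding S_def by (rule cyl_sets) auto
  have "(\<integral>t. real (Ncnt m c t) \<partial>Om m p) = (\<integral>t. (\<Sum>j<m. indicator (S j) t) \<partial>Om m p)"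
    by (intro Bochner_Integration.integral_cong refl) (simp only: Ncnt_sum_real, intro sum.cong refl, simp add: indicator_def S_def)
  also have "\<dots> = (\<Sum>j<m. (\<integral>t. indicator (S j) t \<partial>Om m p))"
    by (rule Bochner_Integration.integral_sum[where f="\<lambda>j. indicator (S j)"]) (use S in \<open>auto intro!: integrable_indicator simp: emeasure_eq_measure\<close>)
  also have "\<dots> = (\<Sum>j<m. measure (Dp p) {x. c \<le> x})"
  proof (intro sum.cong refl)
    fix j assume j: "j \<in> {..<m}"
    have "S j \<inter> space (Om m p) = S j" by (auto simp: S_def)
    then show "(\<integral>t. indicator (S j) t \<partial>Om m p) = measure (Dp p) {x. c \<le> x}"
      using cyl[of "{j}" m "{x. c \<le> x}"] j by (simp add: S_def)
  qed
  finally show ?thesis by simp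
qed

end

lemma blocks_card:
  assumes "\<forall>b<K+1. \<exists>j. b*L \<le> j \<and> j < b*L+L \<and> P j"
  shows "K+1 \<le> card {j. j < (K+1)*L \<and> P j}"
proof -
  have "\<forall>b. \<exists>j. b < K+1 \<longrightarrow> b*L \<le> j \<and> j < b*L+L \<and> P j" using assms by blast
  then obtain g where g0: "\<forall>b. b < K+1 \<longrightarrow> b*L \<le> g b \<and> g b < b*L+L \<and> P (g b)"
    using choice[of "\<lambda>b j. b < K+1 \<longrightarrow> b*L \<le> j \<and> j < b*L+L \<and> P j"] by blast
  then have g: "\<And>b. b < K+1 \<Longrightarrow> b*L \<le> g b \<and> g b < b*L+L \<and> P (g b)" by blast
  have inj: "inj_on g {..<K+1}"
  proof (rule inj_onI)
    fix b b' assume b: "b \<in> {..<K+1}" and b': "b' \<in> {..<K+1}" and e: "g b = g b'"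
    have "g b div L = b"
    proof (rule div_nat_eqI)
      have "b < K+1" using b by simp
      then have "b*L \<le> g b" "g b < b*L+L" using g by auto
      then show "L * b \<le> g b" "g b < L * Suc b" by (simp_all add: algebra_simps)
    qed
    moreover have "g b' div L = b'"
    proof (rule div_nat_eqI)
      have "b' < K+1" using b' by simp
      then have "b'*L \<le> g b'" "g b' < b'*L+L" using g by auto
      then show "L * b' \<le> g b'" "g b' < L * Suc b'" by (simp_all add: algebra_simps)
    qed
    ultimately show "b = b'" using e by metis
  qed
  have sub: "g ` {..<K+1} \<subseteq> {j. j < (K+1)*L \<and> P j}"
  proof
    fix x assume "x \<in> g ` {..<K+1}"
    then obtain b where b: "b < K+1" "x = g b" by auto
    have "(b+1)*L \<le> (K+1)*L" using b(1) by (intro mult_le_mono1) simp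
    then have "b*L+L \<le> (K+1)*L" by simp
    then have "g b < (K+1)*L" using g[OF b(1)] by linarith
    then show "x \<in> {j. j < (K+1)*L \<and> P j}" using g[OF b(1)] b(2) by simp
  qed
  have "card (g ` {..<K+1}) \<le> card {j. j < (K+1)*L \<and> P j}" by (intro card_mono sub) auto
  then show ?thesis using card_image[OF inj] by simp
qed
lemma card_split: "card {j. j < m \<and> c \<le> (t j::real)} + card {j. j < m \<and> t j < c} = m"
proof -
  have "card {j. j < m \<and> c \<le> t j} + card {j. j < m \<and> t j < c} = card ({j. j < m \<and> c \<le> t j} \<union> {j. j < m \<and> t j < c})"
    by (rule card_Un_disjoint[symmetric]) auto
  also have "{j. j < m \<and> c \<le> t j} \<union> {j. j < m \<and> t j < c} = {..<m}" by auto
  finally show ?thesis by simp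
qed

lemma Ncnt_le: "Ncnt m c t \<le> m"
  unfolding Ncnt_card by (rule order.trans[OF card_mono[of "{..<m}"]]) auto

context
  fixes p :: real
  assumes p0: "0 \<le> p" and p1: "p \<le> 1/2"
begin

lemma int_ind: "S \<in> sets (Om m p) \<Longrightarrow> (\<integral>t. indicator S t \<partial>Om m p) = measure (Om m p) S"
  using sets.sets_into_space by (simp add: Int_absorb2)

lemma ind_int: "S \<in> sets (Om m p) \<Longrightarrow> integrable (Om m p) (indicator S :: _ \<Rightarrow> real)"
proof -
  assume S: "S \<in> sets (Om m p)"
  interpret prob_space "Om m p" by (rule Om_prob)
  show ?thesis using S by (auto intro!: integrable_indicator simp: emeasure_eq_measure)
qed

lemma Dm_lt1: "measure (Dp p) {x. x < 1} = 1 - p"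
  by (subst Dp_measure[OF p0 p1]) (auto simp: Lp_def)
lemma Dm_ge_half: "measure (Dp p) {x. 1/2 \<le> x} = 1 - p"
  by (subst Dp_measure[OF p0 p1]) (auto simp: Lp_def)
lemma Dm_ge1: "measure (Dp p) {x. 1 \<le> x} = p"
  by (subst Dp_measure[OF p0 p1]) (auto simp: Lp_def)

lemma vals_Y:
  assumes "k < m" "\<forall>j<m. t j \<in> {0, 1/2, 1}"
  shows "Y m k t \<in> {0, 1/2, 1}"
  using Y_in[OF assms(1), of t] assms(2) by auto

lemma B1:
  assumes m: "1 \<le> m"
  shows "cval m p 0 \<ge> 1 - (1-p)^m"
proof -
  interpret prob_space "Om m p" by (rule Om_prob)
  define E where "E = {t \<in> space (Om m p). \<forall>k\<in>{..<m}. t k \<in> {x. x < 1}}"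
  have E: "E \<in> sets (Om m p)" unfolding E_def by (rule cyl_sets[OF p0 p1]) auto
  have mE: "measure (Om m p) E = (1-p)^m"
    unfolding E_def by (subst cyl[OF p0 p1]) (auto simp: Dm_lt1)
  have "(\<integral>t. 1 - indicator E t \<partial>Om m p) \<le> (\<integral>t. Y m 0 t \<partial>Om m p)"
  proof (rule integral_mono_AE)
    show "integrable (Om m p) (\<lambda>t. (1::real) - indicator E t)" using ind_int[OF E] by (intro Bochner_Integration.integrable_diff) auto
    show "integrable (Om m p) (Y m 0)" using Y_int[OF p0 p1] m by auto
    show "AE t in Om m p. (1::real) - indicator E t \<le> Y m 0 t"
      using Om_AE[OF p0 p1, of m] AE_space
    proof eventually_elim
      fix t :: "nat \<Rightarrow> real" assume t: "\<forall>j<m. t j \<in> {0, 1/2, 1}" and sp: "t \<in> space (Om m p)"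
      have v: "Y m 0 t \<in> {0, 1/2, 1}" using vals_Y[of 0 m t] m t by auto
      show "1 - indicator E t \<le> Y m 0 t"
      proof (cases "t \<in> E")
        case True then show ?thesis using v by auto
      next
        case False
        then obtain k where k: "k < m" "\<not> t k < 1" using sp by (auto simp: E_def)
        have "0 < card {j. j < m \<and> 1 \<le> t j}"
          using k by (subst card_gt_0_iff) auto
        then have "1 \<le> Y m 0 t" using Y_ge_iff[of 0 m 1 t] m by (simp add: Ncnt_card)
        then show ?thesis by (auto simp: indicator_def)
      qed
    qed
  qed
  also have "(\<integral>t. 1 - indicator E t \<partial>Om m p) = 1 - (1-p)^m"
    using ind_int[OF E] by (simp add: Bochner_Integration.integral_diff Int_absorb2[OF sets.sets_into_space[OF E]] mE prob_space)
  finally show ?thesis by (simp add: cval_def)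
qed


lemma B2:
  assumes m: "1 \<le> m"
  shows "cval m p (m-1) \<le> (1-p)^m"
proof -
  interpret prob_space "Om m p" by (rule Om_prob)
  define E where "E = {t \<in> space (Om m p). \<forall>k\<in>{..<m}. t k \<in> {x. 1/2 \<le> x}}"
  have E: "E \<in> sets (Om m p)" unfolding E_def by (rule cyl_sets[OF p0 p1]) auto
  have mE: "measure (Om m p) E = (1-p)^m"
    unfolding E_def by (subst cyl[OF p0 p1]) (auto simp: Dm_ge_half)
  have "(\<integral>t. Y m (m-1) t \<partial>Om m p) \<le> (\<integral>t. indicator E t \<partial>Om m p)"
  proof (rule integral_mono_AE)
    show "integrable (Om m p) (indicator E :: _ \<Rightarrow> real)" using ind_int[OF E] by auto
    show "integrable (Om m p) (Y m (m-1))" using Y_int[OF p0 p1] m by auto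
    show "AE t in Om m p. Y m (m-1) t \<le> indicator E t"
      using Om_AE[OF p0 p1, of m] AE_space
    proof eventually_elim
      fix t :: "nat \<Rightarrow> real" assume t: "\<forall>j<m. t j \<in> {0, 1/2, 1}" and sp: "t \<in> space (Om m p)"
      have v: "Y m (m-1) t \<in> {0, 1/2, 1}" using vals_Y[of "m-1" m t] m t by auto
      show "Y m (m-1) t \<le> indicator E t"
      proof (cases "t \<in> E")
        case True then show ?thesis using v by auto
      next
        case False
        then obtain k where k: "k < m" "\<not> 1/2 \<le> t k" using sp by (auto simp: E_def)
        have "{j. j < m \<and> 1/2 \<le> t j} \<subseteq> {..<m} - {k}" using k by auto
        then have "card {j. j < m \<and> 1/2 \<le> t j} \<le> card ({..<m} - {k})" by (intro card_mono) auto
        then have "card {j. j < m \<and> 1/2 \<le> t j} \<le> m - 1" using k by simp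
        then have "\<not> 1/2 \<le> Y m (m-1) t" using Y_ge_iff[of "m-1" m "1/2" t] m by (simp add: Ncnt_card)
        then show ?thesis using v by (auto simp: indicator_def)
      qed
    qed
  qed
  also have "(\<integral>t. indicator E t \<partial>Om m p) = (1-p)^m"
    by (simp add: Int_absorb2[OF sets.sets_into_space[OF E]] mE)
  finally show ?thesis by (simp add: cval_def)
qed

lemma B3:
  assumes k: "k < m"
  shows "cval m p k \<le> 1/2 + m * p / (2 * (k+1))"
proof -
  interpret prob_space "Om m p" by (rule Om_prob)
  have iN: "integrable (Om m p) (\<lambda>t. real (Ncnt m 1 t))"
    by (rule integrable_const_bound[where B=m]) (auto simp: Ncnt_meas'[OF p0 p1] intro!: AE_I2 Ncnt_le)
  have "(\<integral>t. Y m k t \<partial>Om m p) \<le> (\<integral>t. 1/2 + real (Ncnt m 1 t) / (2 * (k+1)) \<partial>Om m p)"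
  proof (rule integral_mono_AE)
    show "integrable (Om m p) (\<lambda>t. 1/2 + real (Ncnt m 1 t) / (2 * (k+1)))"
      using iN by (intro Bochner_Integration.integrable_add integrable_divide) auto
    show "integrable (Om m p) (Y m k)" using Y_int[OF p0 p1] k by auto
    show "AE t in Om m p. Y m k t \<le> 1/2 + real (Ncnt m 1 t) / (2 * (k+1))"
      using Om_AE[OF p0 p1, of m]
    proof eventually_elim
      fix t :: "nat \<Rightarrow> real" assume t: "\<forall>j<m. t j \<in> {0, 1/2, 1}"
      have v: "Y m k t \<in> {0, 1/2, 1}" using vals_Y[of k m t] k t by auto
      show "Y m k t \<le> 1/2 + real (Ncnt m 1 t) / (2 * (k+1))"
      proof (cases "k < Ncnt m 1 t")
        case True
        then have "real (k+1) \<le> real (Ncnt m 1 t)" by simp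
        then have "1/2 \<le> real (Ncnt m 1 t) / (2 * (k+1))" by (simp add: field_simps)
        moreover have "Y m k t \<le> 1" using v by auto
        ultimately show ?thesis by linarith
      next
        case False
        then have "\<not> 1 \<le> Y m k t" using Y_ge_iff[OF k, of 1 t] by simp
        then have "Y m k t \<le> 1/2" using v by auto
        moreover have "0 \<le> real (Ncnt m 1 t) / (2 * (k+1))" by simp
        ultimately show ?thesis by linarith
      qed
    qed
  qed
  also have "(\<integral>t. 1/2 + real (Ncnt m 1 t) / (2 * (k+1)) \<partial>Om m p) = 1/2 + m * p / (2 * (k+1))"
    using iN by (simp add: Bochner_Integration.integral_add prob_space E_Ncnt[OF p0 p1] Dm_ge1)
  finally show ?thesis by (simp add: cval_def add.commute)
qed

lemma B4:
  assumes k: "k < m"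
  shows "cval m p (m-1-k) \<ge> 1/2 - m * p / (2 * (k+1))"
proof -
  interpret prob_space "Om m p" by (rule Om_prob)
  have iN: "integrable (Om m p) (\<lambda>t. real (Ncnt m (1/2) t))"
    by (rule integrable_const_bound[where B=m]) (auto simp: Ncnt_meas'[OF p0 p1] intro!: AE_I2 Ncnt_le)
  have e: "(\<integral>t. real (Ncnt m (1/2) t) \<partial>Om m p) = m * (1-p)"
    using E_Ncnt[OF p0 p1, of m "1/2"] Dm_ge_half by simp
  have "(\<integral>t. 1/2 - (real m - real (Ncnt m (1/2) t)) / (2 * (k+1)) \<partial>Om m p) \<le> (\<integral>t. Y m (m-1-k) t \<partial>Om m p)"
  proof (rule integral_mono_AE)
    show "integrable (Om m p) (\<lambda>t. 1/2 - (real m - real (Ncnt m (1/2) t)) / (2 * (k+1)))"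
      using iN by (intro Bochner_Integration.integrable_diff integrable_divide) auto
    show "integrable (Om m p) (Y m (m-1-k))" using Y_int[OF p0 p1] k by auto
    show "AE t in Om m p. 1/2 - (real m - real (Ncnt m (1/2) t)) / (2 * (k+1)) \<le> Y m (m-1-k) t"
      using Om_AE[OF p0 p1, of m]
    proof eventually_elim
      fix t :: "nat \<Rightarrow> real" assume t: "\<forall>j<m. t j \<in> {0, 1/2, 1}"
      have v: "Y m (m-1-k) t \<in> {0, 1/2, 1}" using vals_Y[of "m-1-k" m t] k t by auto
      have le: "Ncnt m (1/2) t \<le> m" by (rule Ncnt_le)
      show "1/2 - (real m - real (Ncnt m (1/2) t)) / (2 * (k+1)) \<le> Y m (m-1-k) t"
      proof (cases "m-1-k < Ncnt m (1/2) t")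
        case True
        then have "1/2 \<le> Y m (m-1-k) t" using Y_ge_iff[of "m-1-k" m "1/2" t] k by simp
        moreover have "0 \<le> (real m - real (Ncnt m (1/2) t)) / (2 * (k+1))" using le by simp
        ultimately show ?thesis by linarith
      next
        case False
        then have "real (k+1) \<le> real m - real (Ncnt m (1/2) t)" using k le by linarith
        then have "1/2 \<le> (real m - real (Ncnt m (1/2) t)) / (2 * (k+1))" by (simp add: field_simps)
        moreover have "0 \<le> Y m (m-1-k) t" using v by auto
        ultimately show ?thesis by linarith
      qed
    qed
  qed
  also have "(\<integral>t. 1/2 - (real m - real (Ncnt m (1/2) t)) / (2 * (k+1)) \<partial>Om m p) = 1/2 - m * p / (2 * (k+1))"
    using iN by (simp add: Bochner_Integration.integral_diff prob_space e
        integrable_divide algebra_simps)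
  finally show ?thesis by (simp add: cval_def add.commute)
qed

lemma B8: "k < m \<Longrightarrow> 0 \<le> cval m p k"
  unfolding cval_def
proof (rule integral_nonneg_AE)
  assume k: "k < m"
  show "AE t in Om m p. 0 \<le> Y m k t"
    using Om_AE[OF p0 p1, of m]
  proof eventually_elim
    fix t :: "nat \<Rightarrow> real" assume t: "\<forall>j<m. t j \<in> {0, 1/2, 1}"
    have "Y m k t \<in> {0, 1/2, 1}" using vals_Y[of k m t] k t by auto
    then show "0 \<le> Y m k t" by auto
  qed
qed

lemma B7: "(\<Sum>k<m. cval m p k) = m / 2"
proof -
  interpret prob_space "Om m p" by (rule Om_prob)
  have iN: "integrable (Om m p) (\<lambda>t. real (Ncnt m c t))" for c
    by (rule integrable_const_bound[where B=m]) (auto simp: Ncnt_meas'[OF p0 p1] intro!: AE_I2 Ncnt_le)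
  have s: "(\<Sum>k<m. (if k < N then 1/2 else 0)) = (real N) / 2" if "N \<le> m" for N :: nat
  proof -
    have "(\<Sum>k<m. (if k < N then 1/2 else 0::real)) = (\<Sum>k\<in>{..<m} \<inter> {k. k < N}. 1/2) + (\<Sum>k\<in>{..<m} \<inter> - {k. k < N}. 0)"
      by (rule sum.If_cases) auto
    also have "{..<m} \<inter> {k. k < N} = {..<N}" using that by auto
    finally show ?thesis by simp
  qed
  have e1: "(\<integral>t. real (Ncnt m (1/2) t) \<partial>Om m p) = m * (1-p)"
    using E_Ncnt[OF p0 p1, of m "1/2"] Dm_ge_half by simp
  have e2: "(\<integral>t. real (Ncnt m 1 t) \<partial>Om m p) = m * p"
    using E_Ncnt[OF p0 p1, of m "1"] Dm_ge1 by simp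
  have "(\<Sum>k<m. cval m p k) = (\<integral>t. (\<Sum>k<m. Y m k t) \<partial>Om m p)"
    unfolding cval_def by (rule Bochner_Integration.integral_sum[symmetric]) (use Y_int[OF p0 p1] in auto)
  also have "\<dots> = (\<integral>t. real (Ncnt m (1/2) t) / 2 + real (Ncnt m 1 t) / 2 \<partial>Om m p)"
  proof (rule integral_cong_AE)
    show "(\<lambda>t. \<Sum>k<m. Y m k t) \<in> borel_measurable (Om m p)"
      by (intro borel_measurable_sum Y_meas) auto
    show "(\<lambda>t. real (Ncnt m (1/2) t) / 2 + real (Ncnt m 1 t) / 2) \<in> borel_measurable (Om m p)"
      using Ncnt_meas'[OF p0 p1] by measurable
    show "AE t in Om m p. (\<Sum>k<m. Y m k t) = real (Ncnt m (1/2) t) / 2 + real (Ncnt m 1 t) / 2"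
      using Om_AE[OF p0 p1, of m]
    proof eventually_elim
      fix t :: "nat \<Rightarrow> real" assume t: "\<forall>j<m. t j \<in> {0, 1/2, 1}"
      have "(\<Sum>k<m. Y m k t) = (\<Sum>k<m. (if k < Ncnt m (1/2) t then 1/2 else 0) + (if k < Ncnt m 1 t then 1/2 else 0))"
        using Y_val t by (intro sum.cong) auto
      also have "\<dots> = real (Ncnt m (1/2) t) / 2 + real (Ncnt m 1 t) / 2"
        by (simp add: sum.distrib s Ncnt_le)
      finally show "(\<Sum>k<m. Y m k t) = real (Ncnt m (1/2) t) / 2 + real (Ncnt m 1 t) / 2" .
    qed
  qed
  also have "\<dots> = m / 2"
    using iN by (simp add: Bochner_Integration.integral_add e1 e2 field_simps)
  finally show ?thesis .
qed


end

lemma block_sub: "(b::nat) < K+1 \<Longrightarrow> {b*L..<b*L+L} \<subseteq> {..<(K+1)*L}"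
proof -
  assume b: "b < K+1"
  have "b+1 \<le> K+1" using b by simp
  then have c: "(b+1)*L \<le> (K+1)*L" by (rule mult_le_mono1)
  have c': "b*L \<le> K*L" using c by simp
  show ?thesis
  proof
    fix x assume "x \<in> {b*L..<b*L+L}"
    then have "x < b*L+L" by simp
    then have "x < K*L+L" using c' by linarith
    then show "x \<in> {..<(K+1)*L}" by (simp add: algebra_simps)
  qed
qed

lemma B5:
  fixes K L m :: nat
  assumes m: "m = (K+1)*L" and L: "1 \<le> L"
  shows "cval m (1/2) K \<ge> 1 - (K+1) * (1/2)^L"
proof -
  have p0: "0 \<le> (1/2::real)" and p1: "(1/2::real) \<le> 1/2" by auto
  interpret prob_space "Om m (1/2)" by (rule Om_prob)
  have "K \<le> K*L" using L by simp
  moreover have "m = L + K*L" using m by simp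
  ultimately have k: "K < m" using L by linarith
  define E where "E b = {t \<in> space (Om m (1/2)). \<forall>j\<in>{b*L..<b*L+L}. t j \<in> {x. x < 1}}" for b
  have E: "b < K+1 \<Longrightarrow> E b \<in> sets (Om m (1/2))" for b
    unfolding E_def by (rule cyl_sets[OF p0 p1]) (use block_sub m in auto)
  have mE: "b < K+1 \<Longrightarrow> measure (Om m (1/2)) (E b) = (1/2)^L" for b
  proof -
    assume b: "b < K+1"
    have h: "measure (Dp (1/2)) {x::real. x < 1} = 1/2" using Dm_lt1[OF p0 p1] by simp
    have "measure (Om m (1/2)) (E b) = measure (Dp (1/2)) {x::real. x < 1} ^ card {b*L..<b*L+L}"
      unfolding E_def by (rule cyl[OF p0 p1]) (use block_sub[OF b] m in auto)
    then show ?thesis by (simp only: h) simp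
  qed
  have iE: "integrable (Om m (1/2)) (\<lambda>t. \<Sum>b<K+1. indicator (E b) t :: real)"
    by (intro Bochner_Integration.integrable_sum ind_int[OF p0 p1] E) auto
  have "(\<integral>t. 1 - (\<Sum>b<K+1. indicator (E b) t) \<partial>Om m (1/2)) \<le> (\<integral>t. Y m K t \<partial>Om m (1/2))"
  proof (rule integral_mono_AE)
    show "integrable (Om m (1/2)) (\<lambda>t. 1 - (\<Sum>b<K+1. indicator (E b) t :: real))"
      using iE by (intro Bochner_Integration.integrable_diff) auto
    show "integrable (Om m (1/2)) (Y m K)" using Y_int[OF p0 p1] k by auto
    show "AE t in Om m (1/2). 1 - (\<Sum>b<K+1. indicator (E b) t) \<le> Y m K t"
      using Om_AE[OF p0 p1, of m] AE_space
    proof eventually_elim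
      fix t :: "nat \<Rightarrow> real" assume t: "\<forall>j<m. t j \<in> {0, 1/2, 1}" and sp: "t \<in> space (Om m (1/2))"
      have v: "Y m K t \<in> {0, 1/2, 1}" using vals_Y[OF p0 p1, of K m t] k t by auto
      have sn: "0 \<le> (\<Sum>b<K+1. indicator (E b) t :: real)" by (intro sum_nonneg) auto
      show "1 - (\<Sum>b<K+1. indicator (E b) t) \<le> Y m K t"
      proof (cases "\<exists>b<K+1. t \<in> E b")
        case True
        then obtain b where b: "b < K+1" "t \<in> E b" by auto
        have "indicator (E b) t \<le> (\<Sum>b<K+1. indicator (E b) t :: real)"
          using b by (intro member_le_sum) auto
        then have "1 \<le> (\<Sum>b<K+1. indicator (E b) t :: real)" using b by simp
        moreover have "0 \<le> Y m K t" using v by auto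
        ultimately show ?thesis by linarith
      next
        case False
        have "\<forall>b<K+1. \<exists>j. b*L \<le> j \<and> j < b*L+L \<and> 1 \<le> t j"
        proof (intro allI impI)
          fix b assume b: "b < K+1"
          then have "t \<notin> E b" using False by auto
          then obtain j where "j \<in> {b*L..<b*L+L}" "\<not> t j < 1" using sp by (auto simp: E_def)
          then show "\<exists>j. b*L \<le> j \<and> j < b*L+L \<and> 1 \<le> t j" by auto
        qed
        then have "K+1 \<le> card {j. j < m \<and> 1 \<le> t j}" unfolding m by (rule blocks_card)
        then have "1 \<le> Y m K t" using Y_ge_iff[OF k, of 1 t] by (simp add: Ncnt_card)
        then show ?thesis using sn by linarith
      qed
    qed
  qed
  also have "(\<integral>t. 1 - (\<Sum>b<K+1. indicator (E b) t) \<partial>Om m (1/2)) = 1 - (K+1) * (1/2)^L"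
  proof -
    have "(\<integral>t. (\<Sum>b<K+1. indicator (E b) t :: real) \<partial>Om m (1/2)) = (\<Sum>b<K+1. (\<integral>t. indicator (E b) t \<partial>Om m (1/2)))"
      by (rule Bochner_Integration.integral_sum[where f="\<lambda>b. indicator (E b) :: _ \<Rightarrow> real"]) (use ind_int[OF p0 p1] E in auto)
    also have "\<dots> = (\<Sum>b<K+1. (1/2::real)^L)"
      by (intro sum.cong refl) (simp add: Int_absorb2[OF sets.sets_into_space[OF E]] mE)
    finally have "(\<integral>t. (\<Sum>b<K+1. indicator (E b) t) \<partial>Om m (1/2)) = (K+1) * (1/2)^L" by simp
    then show ?thesis using iE by (simp add: Bochner_Integration.integral_diff prob_space)
  qed
  finally show ?thesis by (simp add: cval_def)
qed

lemma B6:
  fixes K L m :: nat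
  assumes m: "m = (K+1)*L" and L: "1 \<le> L"
  shows "cval m (1/2) (m-1-K) \<le> (K+1) * (1/2)^L"
proof -
  have p0: "0 \<le> (1/2::real)" and p1: "(1/2::real) \<le> 1/2" by auto
  interpret prob_space "Om m (1/2)" by (rule Om_prob)
  have "K \<le> K*L" using L by simp
  moreover have "m = L + K*L" using m by simp
  ultimately have k: "K < m" using L by linarith
  define E where "E b = {t \<in> space (Om m (1/2)). \<forall>j\<in>{b*L..<b*L+L}. t j \<in> {x. 1/2 \<le> x}}" for b
  have E: "b < K+1 \<Longrightarrow> E b \<in> sets (Om m (1/2))" for b
    unfolding E_def by (rule cyl_sets[OF p0 p1]) (use block_sub m in auto)
  have mE: "b < K+1 \<Longrightarrow> measure (Om m (1/2)) (E b) = (1/2)^L" for b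
  proof -
    assume b: "b < K+1"
    have h: "measure (Dp (1/2)) {x::real. 1/2 \<le> x} = 1/2" using Dm_ge_half[OF p0 p1] by simp
    have "measure (Om m (1/2)) (E b) = measure (Dp (1/2)) {x::real. 1/2 \<le> x} ^ card {b*L..<b*L+L}"
      unfolding E_def by (rule cyl[OF p0 p1]) (use block_sub[OF b] m in auto)
    then show ?thesis by (simp only: h) simp
  qed
  have iE: "integrable (Om m (1/2)) (\<lambda>t. \<Sum>b<K+1. indicator (E b) t :: real)"
    by (intro Bochner_Integration.integrable_sum ind_int[OF p0 p1] E) auto
  have "(\<integral>t. Y m (m-1-K) t \<partial>Om m (1/2)) \<le> (\<integral>t. (\<Sum>b<K+1. indicator (E b) t) \<partial>Om m (1/2))"
  proof (rule integral_mono_AE)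
    show "integrable (Om m (1/2)) (Y m (m-1-K))" using Y_int[OF p0 p1] k by auto
    show "integrable (Om m (1/2)) (\<lambda>t. (\<Sum>b<K+1. indicator (E b) t :: real))" by (rule iE)
    show "AE t in Om m (1/2). Y m (m-1-K) t \<le> (\<Sum>b<K+1. indicator (E b) t)"
      using Om_AE[OF p0 p1, of m] AE_space
    proof eventually_elim
      fix t :: "nat \<Rightarrow> real" assume t: "\<forall>j<m. t j \<in> {0, 1/2, 1}" and sp: "t \<in> space (Om m (1/2))"
      have v: "Y m (m-1-K) t \<in> {0, 1/2, 1}" using vals_Y[OF p0 p1, of "m-1-K" m t] k t by auto
      have sn: "0 \<le> (\<Sum>b<K+1. indicator (E b) t :: real)" by (intro sum_nonneg) auto
      show "Y m (m-1-K) t \<le> (\<Sum>b<K+1. indicator (E b) t)"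
      proof (cases "\<exists>b<K+1. t \<in> E b")
        case True
        then obtain b where b: "b < K+1" "t \<in> E b" by auto
        have "indicator (E b) t \<le> (\<Sum>b<K+1. indicator (E b) t :: real)"
          using b by (intro member_le_sum) auto
        then have "1 \<le> (\<Sum>b<K+1. indicator (E b) t :: real)" using b by simp
        moreover have "Y m (m-1-K) t \<le> 1" using v by auto
        ultimately show ?thesis by linarith
      next
        case False
        have "\<forall>b<K+1. \<exists>j. b*L \<le> j \<and> j < b*L+L \<and> t j < 1/2"
        proof (intro allI impI)
          fix b assume b: "b < K+1"
          then have "t \<notin> E b" using False by auto
          then obtain j where "j \<in> {b*L..<b*L+L}" "\<not> 1/2 \<le> t j" using sp by (auto simp: E_def)
          then show "\<exists>j. b*L \<le> j \<and> j < b*L+L \<and> t j < 1/2" by auto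
        qed
        then have "K+1 \<le> card {j. j < m \<and> t j < 1/2}" unfolding m by (rule blocks_card)
        moreover have "card {j. j < m \<and> 1/2 \<le> t j} + card {j. j < m \<and> t j < 1/2} = m" by (rule card_split)
        ultimately have "\<not> m-1-K < card {j. j < m \<and> 1/2 \<le> t j}" by linarith
        then have "\<not> 1/2 \<le> Y m (m-1-K) t" using Y_ge_iff[of "m-1-K" m "1/2" t] k by (simp add: Ncnt_card)
        then have "Y m (m-1-K) t = 0" using v by auto
        then show ?thesis using sn by linarith
      qed
    qed
  qed
  also have "(\<integral>t. (\<Sum>b<K+1. indicator (E b) t :: real) \<partial>Om m (1/2)) = (\<Sum>b<K+1. (\<integral>t. indicator (E b) t \<partial>Om m (1/2)))"
    by (rule Bochner_Integration.integral_sum[where f="\<lambda>b. indicator (E b) :: _ \<Rightarrow> real"]) (use ind_int[OF p0 p1] E in auto)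
  also have "\<dots> = (\<Sum>b<K+1. (1/2::real)^L)"
    by (intro sum.cong refl) (simp add: Int_absorb2[OF sets.sets_into_space[OF E]] mE)
  finally show ?thesis by (simp add: cval_def)
qed

lemma rank_pos_nth:
  assumes "distinct r" "k < length r"
  shows "rank_pos r (r ! k) = k"
  unfolding rank_pos_def
proof (rule the_equality)
  show "k < length r \<and> r ! k = r ! k" using assms by simp
  fix k' assume "k' < length r \<and> r ! k' = r ! k"
  then show "k' = k" using assms nth_eq_iff_index_eq by blast
qed

lemma rank_pos_lt:
  assumes "distinct r" "j \<in> set r"
  shows "rank_pos r j < length r"
proof -
  obtain k where k: "k < length r" "r ! k = j" using assms(2) by (auto simp: in_set_conv_nth)
  show ?thesis using rank_pos_nth[OF assms(1) k(1)] k by simp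
qed

lemma marg:
  fixes i n m k :: nat
  assumes p0: "0 \<le> p" and p1: "p \<le> 1/2" and i: "i < n" and k: "k < m"
  shows "integrable (PiM ({..<n} \<times> {..<m}) (\<lambda>_. Dp p)) (\<lambda>s. Y m k (\<lambda>k'. s (i, k')))"
    and "(\<integral>s. Y m k (\<lambda>k'. s (i, k')) \<partial>PiM ({..<n} \<times> {..<m}) (\<lambda>_. Dp p)) = cval m p k"
proof -
  let ?B = "PiM ({..<n} \<times> {..<m}) (\<lambda>_. Dp p)"
  define h :: "(nat \<times> nat \<Rightarrow> real) \<Rightarrow> nat \<Rightarrow> real" where "h = (\<lambda>s. \<lambda>k'\<in>{..<m}. s (i, k'))"
  have hY: "Y m k (\<lambda>k'. s (i, k')) = Y m k (h s)" for s
    unfolding Y_def h_def by (intro arg_cong[where f="\<lambda>xs. rev (sort xs) ! k"]) auto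
  have hm: "h \<in> measurable ?B (Om m p)"
    unfolding h_def by (intro measurable_restrict measurable_component_singleton) (use i in auto)
  have d: "distr ?B (Om m p) h = Om m p"
    unfolding h_def
    by (rule distr_PiM_reindex[where f="\<lambda>k'. (i, k')", simplified]) (auto simp: Dp_prob inj_on_def i)
  have Ym: "Y m k \<in> borel_measurable (Om m p)" by (rule Y_meas) (auto simp: k)
  have "integrable (distr ?B (Om m p) h) (Y m k)" using d Y_int[OF p0 p1 k] by simp
  then show "integrable ?B (\<lambda>s. Y m k (\<lambda>k'. s (i, k')))"
    unfolding hY using integrable_distr_eq[OF hm Ym] by simp
  have "(\<integral>s. Y m k (\<lambda>k'. s (i, k')) \<partial>?B) = (\<integral>s. Y m k (h s) \<partial>?B)" unfolding hY ..
  also have "\<dots> = (\<integral>t. Y m k t \<partial>distr ?B (Om m p) h)" by (rule integral_distr[OF hm Ym, symmetric])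
  also have "\<dots> = cval m p k" unfolding d cval_def ..
  finally show "(\<integral>s. Y m k (\<lambda>k'. s (i, k')) \<partial>?B) = cval m p k" .
qed

lemma exp_sw_eq:
  assumes p0: "0 \<le> p" and p1: "p \<le> 1/2" and v: "valid_profile m \<sigma>" and j: "j < m"
  shows "exp_sw (Dp p) m \<sigma> j = (\<Sum>i<length \<sigma>. cval m p (rank_pos (\<sigma>!i) j))"
proof -
  let ?B = "PiM ({..<length \<sigma>} \<times> {..<m}) (\<lambda>_. Dp p)"
  have kk: "rank_pos (\<sigma>!i) j < m" if i: "i < length \<sigma>" for i
  proof -
    have "\<sigma>!i \<in> set \<sigma>" using i by simp
    then have d: "distinct (\<sigma>!i)" and s: "set (\<sigma>!i) = {..<m}" using v by (auto simp: valid_profile_def)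
    have "length (\<sigma>!i) = m" using distinct_card[OF d] s by simp
    then show ?thesis using rank_pos_lt[OF d] s j by auto
  qed
  have u: "utility m \<sigma> s i j = Y m (rank_pos (\<sigma>!i) j) (\<lambda>k'. s (i, k'))" for s i
    by (simp add: utility_def Y_def)
  have "exp_sw (Dp p) m \<sigma> j = (\<integral>s. (\<Sum>i<length \<sigma>. Y m (rank_pos (\<sigma>!i) j) (\<lambda>k'. s (i, k'))) \<partial>?B)"
    unfolding exp_sw_def sw_def u ..
  also have "\<dots> = (\<Sum>i<length \<sigma>. (\<integral>s. Y m (rank_pos (\<sigma>!i) j) (\<lambda>k'. s (i, k')) \<partial>?B))"
    by (rule Bochner_Integration.integral_sum) (use marg(1)[OF p0 p1 _ kk] in auto)
  also have "\<dots> = (\<Sum>i<length \<sigma>. cval m p (rank_pos (\<sigma>!i) j))"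
    by (intro sum.cong refl marg(2)[OF p0 p1 _ kk]) auto
  finally show ?thesis .
qed

definition ins :: "nat \<Rightarrow> 'a \<Rightarrow> 'a list \<Rightarrow> 'a list" where
  "ins p e xs = take p xs @ e # drop p xs"

lemma ins_mset: "mset (ins p e xs) = mset (e # xs)"
proof -
  have "mset (ins p e xs) = mset (take p xs) + add_mset e (mset (drop p xs))" by (simp add: ins_def)
  also have "\<dots> = add_mset e (mset (take p xs @ drop p xs))" by (simp only: mset_append) simp
  finally show ?thesis by simp
qed

lemma ins_len: "length (ins p e xs) = Suc (length xs)"
  using arg_cong[OF ins_mset, of size] by simp

lemma ins_set: "set (ins p e xs) = insert e (set xs)"
  using mset_eq_setD[OF ins_mset] by simp

lemma ins_distinct: "distinct (ins p e xs) \<longleftrightarrow> distinct (e # xs)"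
  by (rule mset_eq_imp_distinct_iff[OF ins_mset])

lemma ins_nth:
  assumes "p \<le> length xs" "k \<le> length xs"
  shows "ins p e xs ! k = (if k < p then xs ! k else if k = p then e else xs ! (k - 1))"
  using assms by (auto simp: ins_def nth_append min_def nth_Cons' nth_drop)

definition ds :: "nat \<Rightarrow> nat \<Rightarrow> nat list" where
  "ds m r = rotate r [2..<m]"

lemma ds_len: "length (ds m r) = m - 2" by (simp add: ds_def)
lemma ds_set: "set (ds m r) = {2..<m}" by (simp add: ds_def)
lemma ds_distinct: "distinct (ds m r)" by (simp add: ds_def)
lemma ds_nth: "q < m - 2 \<Longrightarrow> ds m r ! q = 2 + (r + q) mod (m - 2)"
proof -
  assume q: "q < m - 2"
  then have "(r + q) mod (m - 2) < m - 2" by simp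
  then have "2 + (r + q) mod (m - 2) < m" by linarith
  then show ?thesis using q nth_upt[of 2 "(r + q) mod (m - 2)" m] by (simp add: ds_def nth_rotate)
qed

definition RR :: "nat \<Rightarrow> nat \<Rightarrow> nat \<Rightarrow> nat \<Rightarrow> nat list" where
  "RR m pa pb r = ins pa 0 (ins pb 1 (ds m r))"

lemma RR_len: "length (RR m pa pb r) = m" if "2 \<le> m"
  using that by (simp add: RR_def ins_len ds_len)

lemma RR_valid: "2 \<le> m \<Longrightarrow> distinct (RR m pa pb r) \<and> set (RR m pa pb r) = {..<m}"
  by (auto simp: RR_def ins_set ins_distinct ds_set ds_distinct)

lemma mod_inj_aux:
  fixes a r r' M :: nat
  assumes "(a + r) mod M = (a + r') mod M" "r < M" "r' < M" "r' \<le> r"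
  shows "r = r'"
proof -
  have "M dvd (a + r) - (a + r')" using assms(1,4) by (subst mod_eq_dvd_iff_nat[symmetric]) auto
  then have "M dvd r - r'" by simp
  moreover have "r - r' < M" using assms by auto
  ultimately have "r - r' = 0" using dvd_imp_le by (cases "r - r' = 0") auto
  then show ?thesis using assms(4) by simp
qed

lemma RR_dummy_inj:
  assumes m: "2 \<le> m" and pa: "pa \<le> m - 1" and pb: "pb \<le> m - 2" and k: "k < m"
    and d: "d \<noteq> 0" "d \<noteq> 1"
    and r: "r < m - 2" and r': "r' < m - 2"
    and e: "RR m pa pb r ! k = d" and e': "RR m pa pb r' ! k = d"
  shows "r = r'"
proof -
  define k1 where "k1 = (if k < pa then k else k - 1)"
  define k2 where "k2 = (if k1 < pb then k1 else k1 - 1)"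
  have L1: "length (ins pb 1 (ds m x)) = m - 1" for x using m by (simp add: ins_len ds_len)
  have step1: "ins pb 1 (ds m x) ! k1 = d \<and> k1 \<noteq> pb" if ex: "RR m pa pb x ! k = d" for x
  proof -
    have "RR m pa pb x ! k = (if k < pa then ins pb 1 (ds m x) ! k else if k = pa then 0 else ins pb 1 (ds m x) ! (k - 1))"
      unfolding RR_def using L1[of x] pa k m by (intro ins_nth) auto
    then have "ins pb 1 (ds m x) ! k1 = d" using ex d unfolding k1_def by (auto split: if_splits)
    moreover have "k1 \<le> length (ds m x)" using k m pa unfolding k1_def by (auto simp: ds_len)
    moreover have "ins pb 1 (ds m x) ! k1 = (if k1 < pb then ds m x ! k1 else if k1 = pb then 1 else ds m x ! (k1 - 1))"
      using pb m \<open>k1 \<le> length (ds m x)\<close> by (intro ins_nth) (auto simp: ds_len)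
    ultimately show ?thesis using d by auto
  qed
  have step2: "ds m x ! k2 = d" if ex: "RR m pa pb x ! k = d" for x
  proof -
    have s1: "ins pb 1 (ds m x) ! k1 = d" "k1 \<noteq> pb" using step1[OF ex] by auto
    have "k1 \<le> length (ds m x)" using k m pa unfolding k1_def by (auto simp: ds_len)
    then have "ins pb 1 (ds m x) ! k1 = (if k1 < pb then ds m x ! k1 else if k1 = pb then 1 else ds m x ! (k1 - 1))"
      using pb m by (intro ins_nth) (auto simp: ds_len)
    then show ?thesis using s1 unfolding k2_def by (auto split: if_splits)
  qed
  have k2lt: "k2 < m - 2"
  proof -
    have "k1 \<le> m - 2" using k m pa unfolding k1_def by auto
    have "k1 \<noteq> pb" using step1[OF e] by auto
    have "k2 \<noteq> m - 2 \<or> True" by simp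
    show ?thesis
    proof (rule ccontr)
      assume "\<not> k2 < m - 2"
      then have "k2 = m - 2 \<or> k2 > m - 2" by auto
      then have "ds m r ! k2 = ds m r ! k2" by simp
      have "k2 \<ge> length (ds m r)" using \<open>\<not> k2 < m - 2\<close> by (simp add: ds_len)
      then have False
      proof -
        have "k1 \<le> m-2" by fact
        then show False using \<open>\<not> k2 < m - 2\<close> \<open>k1 \<noteq> pb\<close> pb unfolding k2_def by (auto split: if_splits)
      qed
      then show False .
    qed
  qed
  have "2 + (r + k2) mod (m - 2) = 2 + (r' + k2) mod (m - 2)"
    using step2[OF e] step2[OF e'] ds_nth[OF k2lt] by metis
  then have eq: "(k2 + r) mod (m - 2) = (k2 + r') mod (m - 2)" by (simp add: add.commute)
  show ?thesis
  proof (cases "r' \<le> r")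
    case True then show ?thesis using mod_inj_aux[OF eq r r'] by simp
  next
    case False then show ?thesis using mod_inj_aux[OF eq[symmetric] r' r] by simp
  qed
qed

definition prof :: "nat \<Rightarrow> nat \<Rightarrow> nat \<Rightarrow> nat \<Rightarrow> nat \<Rightarrow> nat list list" where
  "prof m K N1 N2 N3 = concat (replicate N1 (map (RR m (m-1) 0) [0..<m-2])) @
     concat (replicate N2 (map (RR m K 0) [0..<m-2])) @
     concat (replicate N3 (map (RR m K (m-2-K)) [0..<m-2]))"

lemma prof_valid: "2 \<le> m \<Longrightarrow> valid_profile m (prof m K N1 N2 N3)"
  unfolding valid_profile_def prof_def using RR_valid by (auto simp: set_replicate_conv_if)

lemma sum_nth_list: "(\<Sum>i<length xs. F (xs ! i)) = sum_list (map F xs)"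
proof -
  have "sum_list (map F xs) = (\<Sum>i = 0..<length (map F xs). map F xs ! i)" by (rule sum_list_sum_nth)
  also have "\<dots> = (\<Sum>i<length xs. F (xs ! i))" by (simp add: atLeast0LessThan)
  finally show ?thesis by simp
qed

lemma sum_list_concat_rep: "sum_list (map F (concat (replicate N xs))) = of_nat N * sum_list (map F xs)"
  by (induction N) (auto simp: algebra_simps)

lemma sum_list_map_upt: "sum_list (map F (map R [0..<M])) = (\<Sum>r<M. F (R r))"
  by (simp add: sum_set_upt_conv_sum_list_nat[symmetric] atLeast0LessThan comp_def)

lemma sum_list_upt': "sum_list (map G [0..<M]) = (\<Sum>r<M. G r)"
  by (simp add: sum_set_upt_conv_sum_list_nat[symmetric] atLeast0LessThan)

definition Ssum :: "(nat \<Rightarrow> real) \<Rightarrow> nat \<Rightarrow> nat \<Rightarrow> nat \<Rightarrow> nat \<Rightarrow> real" where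
  "Ssum c m pa pb j = (\<Sum>r<m-2. c (rank_pos (RR m pa pb r) j))"

lemma prof_sum:
  "(\<Sum>i<length (prof m K N1 N2 N3). c (rank_pos (prof m K N1 N2 N3 ! i) j)) =
     N1 * Ssum c m (m-1) 0 j + N2 * Ssum c m K 0 j + N3 * Ssum c m K (m-2-K) j"
  unfolding sum_nth_list[where xs="prof m K N1 N2 N3" and F="\<lambda>r. c (rank_pos r j)"]
  by (simp add: prof_def sum_list_concat_rep sum_list_upt' comp_def Ssum_def add.assoc)

lemma rank_pos_prop:
  assumes "distinct r" "j \<in> set r"
  shows "rank_pos r j < length r \<and> r ! rank_pos r j = j"
proof -
  obtain k where k: "k < length r" "r ! k = j" using assms(2) by (auto simp: in_set_conv_nth)
  show ?thesis using rank_pos_nth[OF assms(1) k(1)] k by simp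
qed

lemma RR_pos0:
  assumes m: "2 \<le> m" and pa: "pa \<le> m - 1"
  shows "rank_pos (RR m pa pb r) 0 = pa"
proof -
  have L: "length (ins pb 1 (ds m r)) = m - 1" using m by (simp add: ins_len ds_len)
  have "RR m pa pb r ! pa = 0" unfolding RR_def using L pa by (subst ins_nth) auto
  moreover have "pa < length (RR m pa pb r)" using RR_len[OF m] pa m by simp
  ultimately show ?thesis using rank_pos_nth[of "RR m pa pb r" pa] RR_valid[OF m] by metis
qed

lemma RR_pos1:
  assumes m: "2 \<le> m" and pa: "pa \<le> m - 1" and pb: "pb \<le> m - 2"
  shows "rank_pos (RR m pa pb r) 1 = (if pb < pa then pb else pb + 1)"
proof -
  have L: "length (ins pb 1 (ds m r)) = m - 1" using m by (simp add: ins_len ds_len)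
  have I: "ins pb 1 (ds m r) ! pb = 1" using pb m by (subst ins_nth) (auto simp: ds_len)
  define q where "q = (if pb < pa then pb else pb + 1)"
  have q: "q \<le> m - 1" using pb m unfolding q_def by auto
  have "RR m pa pb r ! q = 1" unfolding RR_def using L pa q I by (subst ins_nth) (auto simp: q_def)
  moreover have "q < length (RR m pa pb r)" using RR_len[OF m] q m by simp
  ultimately show ?thesis using rank_pos_nth[of "RR m pa pb r" q] RR_valid[OF m] unfolding q_def by metis
qed

lemma dummy_sum:
  assumes m: "2 \<le> m" and pa: "pa \<le> m - 1" and pb: "pb \<le> m - 2" and d: "2 \<le> d" "d < m"
    and c: "\<And>k. k < m \<Longrightarrow> 0 \<le> c k"
  shows "Ssum c m pa pb d \<le> (\<Sum>k<m. c k)"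
proof -
  define g where "g r = rank_pos (RR m pa pb r) d" for r
  have gp: "g r < m \<and> RR m pa pb r ! g r = d" for r
    using rank_pos_prop[of "RR m pa pb r" d] RR_valid[OF m, of pa pb r] RR_len[OF m] d unfolding g_def by auto
  have inj: "inj_on g {..<m-2}"
  proof (rule inj_onI)
    fix r r' assume r: "r \<in> {..<m-2}" and r': "r' \<in> {..<m-2}" and e: "g r = g r'"
    show "r = r'"
      by (rule RR_dummy_inj[OF m pa pb _ _ _ _ _ gp[of r, THEN conjunct2]])
         (use gp[of r] gp[of r'] e d r r' in auto)
  qed
  have "Ssum c m pa pb d = (\<Sum>k\<in>g ` {..<m-2}. c k)"
    unfolding Ssum_def g_def[symmetric] by (rule sum.reindex[OF inj, symmetric, unfolded comp_def])
  also have "\<dots> \<le> (\<Sum>k<m. c k)"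
    by (rule sum_mono2) (use gp c in auto)
  finally show ?thesis .
qed

lemma B9:
  assumes p0: "0 \<le> p" and p1: "p \<le> 1/2" and k: "k < m"
  shows "cval m p k \<le> 1"
proof -
  interpret prob_space "Om m p" by (rule Om_prob)
  have "cval m p k \<le> (\<integral>t. 1 \<partial>Om m p)"
    unfolding cval_def
  proof (rule integral_mono_AE)
    show "integrable (Om m p) (Y m k)" by (rule Y_int[OF p0 p1 k])
    show "integrable (Om m p) (\<lambda>t. 1::real)" by simp
    show "AE t in Om m p. Y m k t \<le> 1"
      using Om_AE[OF p0 p1, of m]
    proof eventually_elim
      fix t :: "nat \<Rightarrow> real" assume t: "\<forall>j<m. t j \<in> {0, 1/2, 1}"
      have "Y m k t \<in> {0, 1/2, 1}" using vals_Y[OF p0 p1, of k m t] k t by auto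
      then show "Y m k t \<le> 1" by auto
    qed
  qed
  then show ?thesis by (simp add: prob_space)
qed

lemma pow_bound:
  fixes p :: real
  assumes "0 \<le> p" "p \<le> 1"
  shows "(1-p)^m \<le> 1 / (1 + m*p)"
proof -
  have b: "1 + m*p \<le> (1+p)^m" using Bernoulli_inequality[of p m] assms by simp
  have pos: "0 < 1 + m*p" using assms by (simp add: add_pos_nonneg)
  have "(1-p)^m * (1+p)^m = (1 - p^2)^m" by (simp add: power_mult_distrib[symmetric] algebra_simps power2_eq_square)
  also have "\<dots> \<le> 1" using assms by (intro power_le_one) (auto simp: power_le_one)
  finally have "(1-p)^m * (1+p)^m \<le> 1" .
  moreover have "(1-p)^m * (1 + m*p) \<le> (1-p)^m * (1+p)^m"
    using b assms by (intro mult_left_mono) auto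
  ultimately have "(1-p)^m * (1 + m*p) \<le> 1" by linarith
  then show ?thesis using pos by (simp add: field_simps)
qed

lemma two_pow_bound:
  fixes T :: nat
  assumes "1 \<le> T"
  shows "real (T^2) * (1/2)^(T^3) \<le> 1 / real T"
proof -
  have "T^3 < 2^(T^3)" by (rule less_exp)
  then have "real (T^3) \<le> 2^(T^3)" by (metis of_nat_le_iff of_nat_numeral of_nat_power less_imp_le)
  then have "real T^2 * real T \<le> 2^(T^3)" by (simp add: power3_eq_cube power2_eq_square)
  then show ?thesis using assms by (simp add: field_simps power_one_over)
qed

lemma Ssum0: "2 \<le> m \<Longrightarrow> pa \<le> m - 1 \<Longrightarrow> Ssum c m pa pb 0 = real (m-2) * c pa"
  by (simp add: Ssum_def RR_pos0)

lemma Ssum1: "2 \<le> m \<Longrightarrow> pa \<le> m - 1 \<Longrightarrow> pb \<le> m - 2 \<Longrightarrow>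
    Ssum c m pa pb 1 = real (m-2) * c (if pb < pa then pb else pb + 1)"
proof -
  assume a: "2 \<le> m" "pa \<le> m - 1" "pb \<le> m - 2"
  have "Ssum c m pa pb 1 = (\<Sum>r<m-2. c (if pb < pa then pb else pb + 1))"
    unfolding Ssum_def by (intro sum.cong refl arg_cong[where f=c] RR_pos1 a)
  then show ?thesis by simp
qed

lemma exp_prof:
  assumes "0 \<le> p" "p \<le> 1/2" "2 \<le> m" "j < m"
  shows "exp_sw (Dp p) m (prof m K N1 N2 N3) j =
     N1 * Ssum (cval m p) m (m-1) 0 j + N2 * Ssum (cval m p) m K 0 j + N3 * Ssum (cval m p) m K (m-2-K) j"
  using exp_sw_eq[OF assms(1,2) prof_valid[OF assms(3)] assms(4)] prof_sum by simp

lemma Max_ge_img: "j < (m::nat) \<Longrightarrow> g j \<le> Max (g ` {..<m})"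
  by (intro Max_ge finite_imageI) auto

lemma main_contra:
  fixes d e T :: nat and \<alpha> :: real and f :: "nat \<Rightarrow> nat list list \<Rightarrow> nat"
  assumes d0: "0 < d" "d < e" "e \<le> 2*d" and \<alpha>: "0 < \<alpha>"
    and de1: "(2*d + 2*\<alpha>*d) * (1/T) < 3*\<alpha>*d/2 - e/2"
    and de2: "(d + \<alpha>*e) * (1/T) < \<alpha>*e - d"
    and de3: "2*\<alpha>*e * (1/T) < \<alpha>*e - d"
    and T: "2 \<le> T"
    and F: "\<forall>m \<sigma>. m \<ge> 1 \<longrightarrow> valid_profile m \<sigma> \<longrightarrow>
              f m \<sigma> < m \<and>
              (\<forall>D. symmetric_dist D \<longrightarrow>
                 exp_sw D m \<sigma> (f m \<sigma>) \<ge> \<alpha> * Max ((\<lambda>j. exp_sw D m \<sigma> j) ` {..<m}))"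
  shows False
proof -
  define m where "m = T^5"
  define K where "K = T^2 - 1"
  define L where "L = T^3"
  define \<epsilon> where "\<epsilon> = 1 / real T"
  define p where "p = 1 / real T ^ 4"
  define N1 where "N1 = 2*d - e"
  define N2 where "N2 = e - d"
  define N3 where "N3 = d"
  define \<sigma> where "\<sigma> = prof m K N1 N2 N3"
  have T1: "1 \<le> T" using T by simp
  have TT: "T^2 \<ge> 4" using power_mono[OF T, of 2] by simp
  have K1: "1 \<le> K" using TT unfolding K_def by simp
  have KT: "K + 1 = T^2" using TT unfolding K_def by simp
  have mKL: "m = (K+1)*L" unfolding m_def KT L_def by (simp add: power_add[symmetric])
  have L1: "1 \<le> L" unfolding L_def using T1 by simp
  have T5: "2 * T^2 \<le> T^5"
  proof -
    have "T^2 * 2 \<le> T^2 * T^3" using power_mono[OF T, of 3] by (intro mult_left_mono) auto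
    then show ?thesis by (simp add: power_add[symmetric] mult.commute)
  qed
  have mK: "2*K + 2 \<le> m" using T5 KT unfolding m_def by simp
  have m2: "2 \<le> m" using mK by simp
  have v: "valid_profile m \<sigma>" unfolding \<sigma>_def by (rule prof_valid[OF m2])
  have Fm: "f m \<sigma> < m" and FD: "\<And>D. symmetric_dist D \<Longrightarrow> exp_sw D m \<sigma> (f m \<sigma>) \<ge> \<alpha> * Max ((\<lambda>j. exp_sw D m \<sigma> j) ` {..<m})"
    using F m2 v by auto
  have p0: "0 \<le> p" and p1: "p \<le> 1/2"
  proof -
    show "0 \<le> p" unfolding p_def by simp
    have "(2::real) ^ 4 \<le> real T ^ 4" using T by (intro power_mono) auto
    then have "2 \<le> real T ^ 4" by simp
    then show "p \<le> 1/2" unfolding p_def using T1 by (intro divide_left_mono) auto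
  qed
  define M2 where "M2 = real (m-2)"
  have M2pos: "0 < M2" using mK K1 unfolding M2_def by simp
  have mp: "real m * p = real T" unfolding m_def p_def using T1 by (simp add: field_simps power_add[symmetric] power_eq_if)
  have e1: "1 / (1 + real T) \<le> \<epsilon>" unfolding \<epsilon>_def using T1 by (simp add: divide_left_mono)
  have KT': "real (K+1) = real T ^ 2" using KT by (metis of_nat_power)
  have e2: "real m * p / (2 * real (K+1)) = 1 / (2 * real T)"
    unfolding mp KT' using T1 by (simp add: power2_eq_square)
  have e3: "1 / (2 * real T) \<le> \<epsilon>" unfolding \<epsilon>_def using T1 by (simp add: field_simps)
  have c1a: "cval m p (m-1) \<le> \<epsilon>"
    using B2[OF p0 p1, of m] m2 pow_bound[of p m] p0 p1 e1 by (simp add: mp)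
  have c1b: "cval m p 0 \<ge> 1 - \<epsilon>"
    using B1[OF p0 p1, of m] m2 pow_bound[of p m] p0 p1 e1 by (simp add: mp)
  have Km: "K < m" using mK by simp
  have c1c: "cval m p K \<le> 1/2 + \<epsilon>"
    using B3[OF p0 p1 Km] e2 e3 by (simp add: add.commute)
  have c1d: "cval m p (m-1-K) \<ge> 1/2 - \<epsilon>"
    using B4[OF p0 p1 Km] e2 e3 by (simp add: add.commute)
  have tp: "real (K+1) * (1/2)^L \<le> \<epsilon>"
    using two_pow_bound[OF T1] KT unfolding L_def \<epsilon>_def by simp
  have c2a: "cval m (1/2) K \<ge> 1 - \<epsilon>" using B5[OF mKL L1] tp by simp
  have c2b: "cval m (1/2) (m-1-K) \<le> \<epsilon>" using B6[OF mKL L1] tp by simp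
  have c2c: "cval m (1/2) 0 \<le> 1" using B9[of "1/2" 0 m] m2 by simp
  have c2d: "cval m (1/2) (m-1) \<ge> 0" using B8[of "1/2" "m-1" m] m2 by simp
  have c2s: "(\<Sum>k<m. cval m (1/2) k) = real m / 2" using B7[of "1/2" m] by simp
  have c2n: "\<And>k. k < m \<Longrightarrow> 0 \<le> cval m (1/2) k" using B8[of "1/2"] by simp
  have pa1: "m - 1 \<le> m - 1" and pb1: "(0::nat) \<le> m - 2" and pa2: "K \<le> m - 1" and pb3: "m - 2 - K \<le> m - 2" using mK by auto
  have EA: "exp_sw (Dp q) m \<sigma> 0 = M2 * (real N1 * cval m q (m-1) + real (N2 + N3) * cval m q K)"
    if "0 \<le> q" "q \<le> 1/2" for q
  proof -
    have "exp_sw (Dp q) m \<sigma> 0 = N1 * Ssum (cval m q) m (m-1) 0 0 + N2 * Ssum (cval m q) m K 0 0 + N3 * Ssum (cval m q) m K (m-2-K) 0"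
      unfolding \<sigma>_def by (rule exp_prof[OF that m2]) (use m2 in simp)
    then show ?thesis unfolding Ssum0[OF m2 pa1] Ssum0[OF m2 pa2] by (simp add: M2_def algebra_simps)
  qed
  have p31: "(if m - 2 - K < K then m - 2 - K else m - 2 - K + 1) = m - 1 - K" using mK by auto
  have EB: "exp_sw (Dp q) m \<sigma> 1 = M2 * (real (N1 + N2) * cval m q 0 + real N3 * cval m q (m-1-K))"
    if "0 \<le> q" "q \<le> 1/2" for q
  proof -
    have "exp_sw (Dp q) m \<sigma> 1 = N1 * Ssum (cval m q) m (m-1) 0 1 + N2 * Ssum (cval m q) m K 0 1 + N3 * Ssum (cval m q) m K (m-2-K) 1"
      unfolding \<sigma>_def by (rule exp_prof[OF that m2]) (use m2 in simp)
    moreover have "(if 0 < m - 1 then 0 else 0 + 1) = (0::nat)" "(if 0 < K then 0 else 0 + 1) = (0::nat)" using m2 K1 by auto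
    ultimately show ?thesis unfolding Ssum1[OF m2 pa1 pb1] Ssum1[OF m2 pa2 pb1] Ssum1[OF m2 pa2 pb3] p31
      by (simp add: M2_def algebra_simps)
  qed
  have n1: "real N1 = 2 * real d - real e" and n2: "real N2 = real e - real d" and n3: "real N3 = real d"
    using d0 unfolding N1_def N2_def N3_def by auto
  have eps0: "0 < \<epsilon>" unfolding \<epsilon>_def using T1 by simp
  have D1s: "symmetric_dist (Dp p)" by (rule Dp_symm[OF p0 p1])
  have D2s: "symmetric_dist (Dp (1/2))" by (rule Dp_symm) auto
  have h0: "(0::real) \<le> 1/2" and h1: "(1/2::real) \<le> 1/2" by auto
  have ne: "real (N2 + N3) = real e" and nd: "real (N1 + N2) = real d" using n1 n2 n3 by auto
  define j where "j = f m \<sigma>"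
  have jm: "j < m" using Fm unfolding j_def .
  have Mx: "exp_sw D m \<sigma> j \<ge> \<alpha> * exp_sw D m \<sigma> k" if "symmetric_dist D" "k < m" for D k
  proof -
    have "exp_sw D m \<sigma> j \<ge> \<alpha> * Max ((\<lambda>j. exp_sw D m \<sigma> j) ` {..<m})"
      using FD[OF that(1)] unfolding j_def .
    moreover have "exp_sw D m \<sigma> k \<le> Max ((\<lambda>j. exp_sw D m \<sigma> j) ` {..<m})"
      by (rule Max_ge_img[OF that(2)])
    ultimately show ?thesis using \<alpha> by (meson mult_left_mono less_imp_le order.trans)
  qed
  have m1: "1 < m" using m2 by simp
  have m0: "0 < m" using m2 by simp
  consider "j = 0" | "j = 1" | "2 \<le> j" by linarith
  then show False
  proof cases
    case 1
    have ge: "exp_sw (Dp p) m \<sigma> 0 \<ge> \<alpha> * exp_sw (Dp p) m \<sigma> 1" using Mx[OF D1s m1] 1 by simp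
    have a1: "real N1 * cval m p (m-1) \<le> real N1 * \<epsilon>" using c1a by (intro mult_left_mono) auto
    have a2: "real (N2+N3) * cval m p K \<le> real e * (1/2 + \<epsilon>)" using c1c ne by (metis mult_left_mono of_nat_0_le_iff)
    have A: "exp_sw (Dp p) m \<sigma> 0 \<le> M2 * (2 * real d * \<epsilon> + real e / 2)"
    proof -
      have "real N1 * cval m p (m-1) + real (N2+N3) * cval m p K \<le> 2 * real d * \<epsilon> + real e / 2"
      proof -
        have x1: "real N1 * \<epsilon> = 2 * real d * \<epsilon> - real e * \<epsilon>" unfolding n1 by (simp add: algebra_simps)
        have x2: "real e * (1/2 + \<epsilon>) = real e / 2 + real e * \<epsilon>" by (simp add: algebra_simps)
        show ?thesis using a1 a2 x1 x2 by linarith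
      qed
      then show ?thesis unfolding EA[OF p0 p1] using M2pos by (intro mult_left_mono) auto
    qed
    have b1: "real (N1+N2) * cval m p 0 \<ge> real d * (1 - \<epsilon>)" using c1b nd by (metis mult_left_mono of_nat_0_le_iff)
    have b2: "real N3 * cval m p (m-1-K) \<ge> real d * (1/2 - \<epsilon>)" using c1d n3 by (metis mult_left_mono of_nat_0_le_iff)
    have B: "exp_sw (Dp p) m \<sigma> 1 \<ge> M2 * (real d * (1 - \<epsilon>) + real d * (1/2 - \<epsilon>))"
      unfolding EB[OF p0 p1] using M2pos b1 b2 by (intro mult_left_mono) auto
    have I1: "2 * real d * \<epsilon> + real e / 2 < \<alpha> * (real d * (1 - \<epsilon>) + real d * (1/2 - \<epsilon>))"
      using de1 unfolding \<epsilon>_def[symmetric] by (simp add: algebra_simps)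
    have "M2 * (2 * real d * \<epsilon> + real e / 2) < M2 * (\<alpha> * (real d * (1 - \<epsilon>) + real d * (1/2 - \<epsilon>)))"
      using I1 M2pos by simp
    also have "\<dots> = \<alpha> * (M2 * (real d * (1 - \<epsilon>) + real d * (1/2 - \<epsilon>)))" by simp
    also have "\<dots> \<le> \<alpha> * exp_sw (Dp p) m \<sigma> 1" using B \<alpha> by (intro mult_left_mono) auto
    finally show False using A ge by linarith
  next
    case 2
    have ge: "exp_sw (Dp (1/2)) m \<sigma> 1 \<ge> \<alpha> * exp_sw (Dp (1/2)) m \<sigma> 0" using Mx[OF D2s m0] 2 by simp
    have b1: "real (N1+N2) * cval m (1/2) 0 \<le> real d * 1" using c2c nd by (metis mult_left_mono of_nat_0_le_iff)
    have b2: "real N3 * cval m (1/2) (m-1-K) \<le> real d * \<epsilon>" using c2b n3 by (metis mult_left_mono of_nat_0_le_iff)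
    have B: "exp_sw (Dp (1/2)) m \<sigma> 1 \<le> M2 * (real d * 1 + real d * \<epsilon>)"
      unfolding EB[OF h0 h1] using M2pos b1 b2 by (intro mult_left_mono) auto
    have a1: "real N1 * cval m (1/2) (m-1) \<ge> 0" using c2d by simp
    have a2: "real (N2+N3) * cval m (1/2) K \<ge> real e * (1 - \<epsilon>)" using c2a ne by (metis mult_left_mono of_nat_0_le_iff)
    have A: "exp_sw (Dp (1/2)) m \<sigma> 0 \<ge> M2 * (real e * (1 - \<epsilon>))"
      unfolding EA[OF h0 h1] using M2pos a1 a2 by (intro mult_left_mono) auto
    have I2: "real d * 1 + real d * \<epsilon> < \<alpha> * (real e * (1 - \<epsilon>))"
      using de2 unfolding \<epsilon>_def[symmetric] by (simp add: algebra_simps)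
    have "M2 * (real d * 1 + real d * \<epsilon>) < M2 * (\<alpha> * (real e * (1 - \<epsilon>)))"
      using I2 M2pos by simp
    also have "\<dots> = \<alpha> * (M2 * (real e * (1 - \<epsilon>)))" by simp
    also have "\<dots> \<le> \<alpha> * exp_sw (Dp (1/2)) m \<sigma> 0" using A \<alpha> by (intro mult_left_mono) auto
    finally show False using B ge by linarith
  next
    case 3
    have ge: "exp_sw (Dp (1/2)) m \<sigma> j \<ge> \<alpha> * exp_sw (Dp (1/2)) m \<sigma> 0" using Mx[OF D2s m0] by simp
    have Sd: "Ssum (cval m (1/2)) m pa pb j \<le> real m / 2" if "pa \<le> m - 1" "pb \<le> m - 2" for pa pb
      using dummy_sum[where c="cval m (1/2)", OF m2 that 3 jm c2n] c2s by simp
    have "exp_sw (Dp (1/2)) m \<sigma> j = N1 * Ssum (cval m (1/2)) m (m-1) 0 j + N2 * Ssum (cval m (1/2)) m K 0 j + N3 * Ssum (cval m (1/2)) m K (m-2-K) j"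
      unfolding \<sigma>_def by (rule exp_prof[OF h0 h1 m2 jm])
    also have "\<dots> \<le> N1 * (real m / 2) + N2 * (real m / 2) + N3 * (real m / 2)"
      using Sd[OF pa1 pb1] Sd[OF pa2 pb1] Sd[OF pa2 pb3]
      by (intro add_mono mult_left_mono) auto
    also have "\<dots> = (real N1 + real N2 + real N3) * real m / 2" by (simp add: algebra_simps)
    also have "\<dots> = real d * real m" unfolding n1 n2 n3 by (simp add: algebra_simps)
    finally have U: "exp_sw (Dp (1/2)) m \<sigma> j \<le> real d * real m" .
    have a1: "real N1 * cval m (1/2) (m-1) \<ge> 0" using c2d by simp
    have a2: "real (N2+N3) * cval m (1/2) K \<ge> real e * (1 - \<epsilon>)" using c2a ne by (metis mult_left_mono of_nat_0_le_iff)
    have A: "exp_sw (Dp (1/2)) m \<sigma> 0 \<ge> M2 * (real e * (1 - \<epsilon>))"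
      unfolding EA[OF h0 h1] using M2pos a1 a2 by (intro mult_left_mono) auto
    have meps: "real m * \<epsilon> \<ge> 2"
    proof -
      have "real m * \<epsilon> = real T ^ 4" unfolding m_def \<epsilon>_def using T1 by (simp add: field_simps power_eq_if)
      moreover have "(2::real) ^ 4 \<le> real T ^ 4" using T by (intro power_mono) auto
      ultimately show ?thesis by simp
    qed
    have M2m: "M2 \<ge> real m * (1 - \<epsilon>)" unfolding M2_def using meps m2 by (simp add: algebra_simps of_nat_diff)
    have eps1: "\<epsilon> \<le> 1" unfolding \<epsilon>_def using T1 by simp
    have "real e * (1 - \<epsilon>) \<ge> 0" using eps1 by simp
    then have "M2 * (real e * (1 - \<epsilon>)) \<ge> real m * (1 - \<epsilon>) * (real e * (1 - \<epsilon>))"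
      using M2m by (intro mult_right_mono) auto
    moreover have "real m * (1 - \<epsilon>) * (real e * (1 - \<epsilon>)) = real m * real e * (1 - \<epsilon>)^2"
      by (simp add: power2_eq_square algebra_simps)
    moreover have "(1 - \<epsilon>)^2 \<ge> 1 - 2 * \<epsilon>" by (simp add: power2_eq_square algebra_simps)
    ultimately have "M2 * (real e * (1 - \<epsilon>)) \<ge> real m * real e * (1 - 2 * \<epsilon>)"
      by (smt (verit) mult_left_mono of_nat_0_le_iff mult_nonneg_nonneg)
    moreover have I3: "real d < \<alpha> * (real e * (1 - 2 * \<epsilon>))"
      using de3 unfolding \<epsilon>_def[symmetric] by (simp add: algebra_simps)
    ultimately have "\<alpha> * exp_sw (Dp (1/2)) m \<sigma> 0 \<ge> \<alpha> * (real m * real e * (1 - 2 * \<epsilon>))"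
      using A \<alpha> by (meson less_imp_le mult_left_mono order.trans)
    moreover have "real d * real m < \<alpha> * (real m * real e * (1 - 2 * \<epsilon>))"
    proof -
      have "real m * real d < real m * (\<alpha> * (real e * (1 - 2 * \<epsilon>)))" using I3 m0 by simp
      then show ?thesis by (simp add: algebra_simps)
    qed
    ultimately show False using U ge by linarith
  qed
qed

lemma lt_inv_T:
  fixes A B :: real and T :: nat
  assumes "0 < B" "A / B < real T" "0 \<le> A"
  shows "A * (1 / real T) < B"
proof -
  have T0: "0 < real T" using assms by (smt (verit) divide_nonneg_pos)
  have "A < B * real T" using assms(1,2) by (simp add: divide_less_eq mult.commute)
  then show ?thesis using T0 by (simp add: field_simps)
qed

theorem theorem6:
  fixes \<alpha> :: real
  assumes "\<alpha> > sqrt (1/3)"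
  shows "\<not> (\<exists>f :: nat \<Rightarrow> nat list list \<Rightarrow> nat.
            \<forall>m \<sigma>. m \<ge> 1 \<longrightarrow> valid_profile m \<sigma> \<longrightarrow>
              f m \<sigma> < m \<and>
              (\<forall>D. symmetric_dist D \<longrightarrow>
                 exp_sw D m \<sigma> (f m \<sigma>) \<ge> \<alpha> * Max ((\<lambda>j. exp_sw D m \<sigma> j) ` {..<m})))"
proof
  assume "\<exists>f :: nat \<Rightarrow> nat list list \<Rightarrow> nat.
            \<forall>m \<sigma>. m \<ge> 1 \<longrightarrow> valid_profile m \<sigma> \<longrightarrow>
              f m \<sigma> < m \<and>
              (\<forall>D. symmetric_dist D \<longrightarrow>
                 exp_sw D m \<sigma> (f m \<sigma>) \<ge> \<alpha> * Max ((\<lambda>j. exp_sw D m \<sigma> j) ` {..<m}))"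
  then obtain f :: "nat \<Rightarrow> nat list list \<Rightarrow> nat" where F: "\<forall>m \<sigma>. m \<ge> 1 \<longrightarrow> valid_profile m \<sigma> \<longrightarrow>
              f m \<sigma> < m \<and>
              (\<forall>D. symmetric_dist D \<longrightarrow>
                 exp_sw D m \<sigma> (f m \<sigma>) \<ge> \<alpha> * Max ((\<lambda>j. exp_sw D m \<sigma> j) ` {..<m}))" by blast
  have s0: "0 < sqrt (1/3::real)" by simp
  have a0: "0 < \<alpha>" using assms s0 by linarith
  have "sqrt (1/3::real) ^ 2 < \<alpha> ^ 2" using assms s0 by (intro power_strict_mono) auto
  then have a2: "1 < 3 * \<alpha>^2" by simp
  have ahalf: "1/2 < \<alpha>"
  proof (rule ccontr)
    assume "\<not> 1/2 < \<alpha>"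
    then have "\<alpha> \<le> 1/2" by simp
    then have "\<alpha>^2 \<le> (1/2)^2" using a0 by (intro power_mono) auto
    then have "\<alpha>^2 \<le> 1/4" by (simp add: power2_eq_square)
    then show False using a2 by linarith
  qed
  define lo where "lo = max (1/(2*\<alpha>)) (1/2)"
  define hi where "hi = min (3*\<alpha>/2) 1"
  have l1: "1/(2*\<alpha>) < 3*\<alpha>/2"
  proof -
    have "1 < 3 * \<alpha> * \<alpha>" using a2 by (simp add: power2_eq_square)
    then show ?thesis using a0 by (simp add: field_simps)
  qed
  have l2: "1/(2*\<alpha>) < 1" using ahalf a0 by (simp add: field_simps)
  have "lo < hi" unfolding lo_def hi_def using l1 l2 ahalf by auto
  then obtain q where q: "q \<in> \<rat>" "lo < q" "q < hi" using Rats_dense_in_real by blast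
  obtain a b :: int where ab: "b > 0" "q = of_int a / of_int b" using Rats_cases'[OF q(1)] by metis
  have qlo: "1/(2*\<alpha>) < q" "1/2 < q" and qhi: "q < 3*\<alpha>/2" "q < 1" using q unfolding lo_def hi_def by auto
  have bpos: "0 < real_of_int b" using ab by simp
  have "1/2 < real_of_int a / real_of_int b" using qlo ab by simp
  then have ab1: "real_of_int b < 2 * real_of_int a" using bpos by (simp add: field_simps)
  have "real_of_int a / real_of_int b < 1" using qhi ab by simp
  then have ab2: "real_of_int a < real_of_int b" using bpos by (simp add: field_simps)
  have apos: "0 < a" using ab1 bpos by linarith
  define d where "d = nat b"
  define e where "e = 2 * nat a"
  have rd: "real d = real_of_int b" unfolding d_def using ab by simp
  have re: "real e = 2 * real_of_int a" unfolding e_def using apos by simp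
  have qde: "q = real e / (2 * real d)" using ab rd re by simp
  have d0: "0 < d" using ab unfolding d_def by simp
  have de: "d < e" using ab1 rd re by linarith
  have ed: "e \<le> 2*d" using ab2 rd re by linarith
  have c1: "real d < \<alpha> * real e"
  proof -
    have "1/(2*\<alpha>) < real e / (2 * real d)" using qlo qde by simp
    then show ?thesis using a0 d0 by (simp add: field_simps)
  qed
  have c2: "real e < 3 * \<alpha> * real d"
  proof -
    have "real e / (2 * real d) < 3*\<alpha>/2" using qhi qde by simp
    then show ?thesis using a0 d0 by (simp add: field_simps)
  qed
  define \<delta>1 where "\<delta>1 = 3*\<alpha>*real d/2 - real e/2"
  define \<delta>2 where "\<delta>2 = \<alpha>*real e - real d"
  have dl1: "0 < \<delta>1" unfolding \<delta>1_def using c2 by simp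
  have dl2: "0 < \<delta>2" unfolding \<delta>2_def using c1 by simp
  obtain T :: nat where T: "max 2 (max ((2*real d + 2*\<alpha>*real d)/\<delta>1) (max ((real d + \<alpha>*real e)/\<delta>2) (2*\<alpha>*real e/\<delta>2))) < real T"
    using reals_Archimedean2 by blast
  have T2: "2 \<le> T" using T by simp
  have de1: "(2*real d + 2*\<alpha>*real d) * (1/real T) < 3*\<alpha>*real d/2 - real e/2"
    using lt_inv_T[OF dl1, of "2*real d + 2*\<alpha>*real d" T] T a0 unfolding \<delta>1_def by simp
  have de2: "(real d + \<alpha>*real e) * (1/real T) < \<alpha>*real e - real d"
    using lt_inv_T[OF dl2, of "real d + \<alpha>*real e" T] T a0 unfolding \<delta>2_def by simp
  have de3: "2*\<alpha>*real e * (1/real T) < \<alpha>*real e - real d"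
    using lt_inv_T[OF dl2, of "2*\<alpha>*real e" T] T a0 unfolding \<delta>2_def by simp
  show False
    by (rule main_contra[OF d0 de ed a0 _ _ _ T2 F]) (use de1 de2 de3 in auto)
qed

end
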